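(* For every integer $N\ge 0$, let $T_{1\times 4}(8,N)$ be the number of tilings of an $8\times n$ rectangle, $n=N/2$, by $N$ tiles of size $1\times 4$ (and $0$ if $N$ is odd). Then, as formal power series, $\sum_{N\ge 0} T_{1\times 4}(8,N)\,z^N=p(z)/q(z)$ where \[ p(z)=(1-z^2)^3(1+z^2)^3(1+z^4)^3(1-z^4-z^6-z^8+z^{12}), \] \[ q(z)=1-z^2-z^4-9z^8+2z^{10}+8z^{12}+5z^{14}+16z^{16}-13z^{20}-6z^{22}-13z^{24}-2z^{26}+10z^{28}+6z^{30}+6z^{32}+z^{34}-5z^{36}-2z^{38}-z^{40}+z^{44}. \]
   Context: A tiling of an $m\times n$ rectangle (width $m$, length $n$, made of $mn$ unit squares) by $a\times b$ tiles is a partition of the rectangle into non-overlapping axis-parallel $a\times b$ rectangles with integer corner coordinates, each placed in either of its two orientations. Tilings related by reflections or rotations of the rectangle are counted as distinct. The empty tiling counts once for $N=0$. *)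

theory Defs
  imports "HOL-Computational_Algebra.Formal_Power_Series"
begin

definition rect :: "nat \<Rightarrow> nat \<Rightarrow> nat \<Rightarrow> nat \<Rightarrow> (nat \<times> nat) set" where
  "rect x y w h = {x..<x+w} \<times> {y..<y+h}"

definition is_tile :: "nat \<Rightarrow> nat \<Rightarrow> (nat \<times> nat) set \<Rightarrow> bool" where
  "is_tile a b S \<longleftrightarrow> (\<exists>x y. S = rect x y a b \<or> S = rect x y b a)"

definition is_tiling :: "nat \<Rightarrow> nat \<Rightarrow> nat \<Rightarrow> nat \<Rightarrow> (nat \<times> nat) set set \<Rightarrow> bool" where
  "is_tiling a b m n T \<longleftrightarrow>
     (\<forall>S\<in>T. is_tile a b S) \<and>
     (\<forall>S\<in>T. \<forall>S'\<in>T. S \<noteq> S' \<longrightarrow> S \<inter> S' = {}) \<and>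
     \<Union>T = {0..<m} \<times> {0..<n}"

definition T14_8 :: "nat \<Rightarrow> nat" where
  "T14_8 N = (if even N then card {T. is_tiling 1 4 8 (N div 2) T \<and> card T = N} else 0)"

end

theory Submission
  imports Defs
begin

unbundle fps_syntax


definition tilings :: "(nat\<times>nat) set \<Rightarrow> (nat\<times>nat) set set set" where
 "tilings R = {T. (\<forall>S\<in>T. is_tile 1 4 S) \<and> (\<forall>S\<in>T. \<forall>S'\<in>T. S \<noteq> S' \<longrightarrow> S \<inter> S' = {}) \<and> \<Union>T = R}"

lemma tile_nonempty: "is_tile 1 4 S \<Longrightarrow> S \<noteq> {}"
proof -
  assume "is_tile 1 4 S"
  then obtain x y where "S = rect x y 1 4 \<or> S = rect x y 4 1" unfolding is_tile_def by blast
  hence "(x,y) \<in> S" unfolding rect_def by auto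
  thus ?thesis by blast
qed

lemma tile_card: "is_tile 1 4 S \<Longrightarrow> card S = 4"
  unfolding is_tile_def rect_def by (auto simp: card_cartesian_product)

lemma tilings_empty: "tilings {} = {{}}"
  unfolding tilings_def using tile_nonempty by auto

lemma tilings_finite: "finite R \<Longrightarrow> finite (tilings R)"
proof -
  assume "finite R"
  have "tilings R \<subseteq> Pow (Pow R)" unfolding tilings_def by auto
  thus ?thesis using \<open>finite R\<close> finite_subset by blast
qed

lemma tile_cases:
  assumes "is_tile 1 4 S" "(cx,cy) \<in> S" "S \<subseteq> R"
    "\<forall>(x,y)\<in>R. cy < y \<or> (y = cy \<and> cx \<le> x)"
  shows "S = rect cx cy 1 4 \<or> S = rect cx cy 4 1"
proof -
  obtain x y where "S = rect x y 1 4 \<or> S = rect x y 4 1"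
    using assms(1) unfolding is_tile_def by blast
  thus ?thesis
  proof
    assume S: "S = rect x y 1 4"
    hence "(x,y) \<in> R" using assms(3) unfolding rect_def by auto
    moreover have "cx = x" "y \<le> cy" using assms(2) S unfolding rect_def by auto
    ultimately have "y = cy" using assms(4) by auto
    thus ?thesis using S \<open>cx = x\<close> by simp
  next
    assume S: "S = rect x y 4 1"
    hence "(x,y) \<in> R" using assms(3) unfolding rect_def by auto
    moreover have "cy = y" "x \<le> cx" using assms(2) S unfolding rect_def by auto
    ultimately have "x = cx" using assms(4) by auto
    thus ?thesis using S \<open>cy = y\<close> by simp
  qed
qed

lemma tilings_insert:
  assumes "V \<subseteq> R" "is_tile 1 4 V"
  shows "tilings R \<inter> {T. V \<in> T} = insert V ` tilings (R - V)"
proof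
  show "tilings R \<inter> {T. V \<in> T} \<subseteq> insert V ` tilings (R - V)"
  proof
    fix T assume T: "T \<in> tilings R \<inter> {T. V \<in> T}"
    have "T - {V} \<in> tilings (R - V)"
    proof -
      have "\<Union>(T - {V}) = R - V"
      proof
        show "\<Union>(T - {V}) \<subseteq> R - V" using T unfolding tilings_def by blast
        show "R - V \<subseteq> \<Union>(T - {V})" using T unfolding tilings_def by blast
      qed
      thus ?thesis using T unfolding tilings_def by auto
    qed
    moreover have "T = insert V (T - {V})" using T by auto
    ultimately show "T \<in> insert V ` tilings (R - V)" by blast
  qed
  show "insert V ` tilings (R - V) \<subseteq> tilings R \<inter> {T. V \<in> T}"
  proof
    fix T assume "T \<in> insert V ` tilings (R - V)"
    then obtain T' where T': "T' \<in> tilings (R - V)" "T = insert V T'" by blast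
    have "\<forall>S\<in>T'. S \<inter> V = {}" using T' unfolding tilings_def by blast
    thus "T \<in> tilings R \<inter> {T. V \<in> T}" using T' assms unfolding tilings_def by auto
  qed
qed

lemma card_insert_img:
  assumes "V \<noteq> {}" shows "card (insert V ` tilings (R - V)) = card (tilings (R - V))"
proof (rule card_image)
  show "inj_on (insert V) (tilings (R - V))"
  proof (rule inj_onI)
    fix A B assume A: "A \<in> tilings (R - V)" and B: "B \<in> tilings (R - V)" and eq: "insert V A = insert V B"
    have "V \<notin> A" using A assms unfolding tilings_def by blast
    moreover have "V \<notin> B" using B assms unfolding tilings_def by blast
    ultimately show "A = B" using eq by (metis insert_ident)
  qed
qed

lemma lexmin_rec:
  assumes fin: "finite R" and c: "(cx,cy) \<in> R" and mn: "\<forall>(x,y)\<in>R. cy < y \<or> (y = cy \<and> cx \<le> x)"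
  shows "card (tilings R) = (if rect cx cy 1 4 \<subseteq> R then card (tilings (R - rect cx cy 1 4)) else 0)
          + (if rect cx cy 4 1 \<subseteq> R then card (tilings (R - rect cx cy 4 1)) else 0)"
proof -
  define V where "V = rect cx cy 1 4"
  define H where "H = rect cx cy 4 1"
  have tV: "is_tile 1 4 V" and tH: "is_tile 1 4 H" unfolding V_def H_def is_tile_def by auto
  have cV: "(cx,cy) \<in> V" and cH: "(cx,cy) \<in> H" unfolding V_def H_def rect_def by auto
  have "(cx,cy+1) \<in> V" "(cx,cy+1) \<notin> H" unfolding V_def H_def rect_def by auto
  hence VH: "V \<noteq> H" by blast
  have split: "tilings R = (tilings R \<inter> {T. V \<in> T}) \<union> (tilings R \<inter> {T. H \<in> T})"
  proof -
    { fix T assume T: "T \<in> tilings R"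
      then obtain S where "S \<in> T" "(cx,cy) \<in> S" using c unfolding tilings_def by blast
      moreover have "S \<subseteq> R" "is_tile 1 4 S" using T \<open>S \<in> T\<close> unfolding tilings_def by auto
      ultimately have "S = V \<or> S = H" using tile_cases[OF _ _ _ mn] unfolding V_def H_def by blast
      hence "V \<in> T \<or> H \<in> T" using \<open>S \<in> T\<close> by blast }
    thus ?thesis by blast
  qed
  have disj: "(tilings R \<inter> {T. V \<in> T}) \<inter> (tilings R \<inter> {T. H \<in> T}) = {}"
    using VH cV cH unfolding tilings_def by blast
  have fins: "finite (tilings R \<inter> {T. V \<in> T})" "finite (tilings R \<inter> {T. H \<in> T})"
    using tilings_finite[OF fin] by auto
  have cA: "card (tilings R \<inter> {T. V \<in> T}) = (if V \<subseteq> R then card (tilings (R - V)) else 0)"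
  proof (cases "V \<subseteq> R")
    case True thus ?thesis using tilings_insert[OF True tV] card_insert_img tile_nonempty[OF tV] by simp
  next
    case False
    hence "tilings R \<inter> {T. V \<in> T} = {}" unfolding tilings_def by blast
    thus ?thesis using False by simp
  qed
  have cB: "card (tilings R \<inter> {T. H \<in> T}) = (if H \<subseteq> R then card (tilings (R - H)) else 0)"
  proof (cases "H \<subseteq> R")
    case True thus ?thesis using tilings_insert[OF True tH] card_insert_img tile_nonempty[OF tH] by simp
  next
    case False
    hence "tilings R \<inter> {T. H \<in> T} = {}" unfolding tilings_def by blast
    thus ?thesis using False by simp
  qed
  show ?thesis
    using card_Un_disjoint[OF fins disj] split cA cB unfolding V_def H_def by simp
qed


definition reg :: "nat \<Rightarrow> nat list \<Rightarrow> nat \<Rightarrow> (nat\<times>nat) set" where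
  "reg y0 h m = {(x,y). x < length h \<and> y0 + h!x \<le> y \<and> y < m}"

lemma reg_finite: "finite (reg y0 h m)"
proof -
  have "reg y0 h m \<subseteq> {..<length h} \<times> {..<m}" unfolding reg_def by auto
  thus ?thesis using finite_subset by blast
qed

definition G :: "nat \<Rightarrow> nat list \<Rightarrow> nat \<Rightarrow> nat" where
  "G y0 h m = card (tilings (reg y0 h m))"

definition hz :: "nat list \<Rightarrow> bool" where "hz vs \<longleftrightarrow> 3 \<le> length vs \<and> vs!0 = 0 \<and> vs!1 = 0 \<and> vs!2 = 0"
fun fr :: "bool \<Rightarrow> nat list \<Rightarrow> nat list list" where
  "fr b [] = [[]]"
| "fr b (v # vs) = (if v \<noteq> 0 then map (Cons v) (fr b vs) else
     (if b then map (Cons 4) (fr b vs) else []) @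
     (if hz vs then map (\<lambda>r. 1#1#1#1#r) (fr b (drop 3 vs)) else []))"

lemma fr_pos': "\<forall>r\<in>set (fr b s). \<forall>x\<in>set r. x \<noteq> 0"
proof (induction b s rule: fr.induct)
  case (1 b) thus ?case by simp
next
  case (2 b v vs)
  show ?case
  proof
    fix r assume r: "r \<in> set (fr b (v # vs))"
    show "\<forall>x\<in>set r. x \<noteq> 0"
    proof (cases "v = 0")
      case False
      then obtain r' where "r = v # r'" "r' \<in> set (fr b vs)" using r by auto
      thus ?thesis using 2(1) False by auto
    next
      case True
      hence "r \<in> set (if b then map (Cons 4) (fr b vs) else []) \<or> r \<in> set (if hz vs then map (\<lambda>r. 1#1#1#1#r) (fr b (drop 3 vs)) else [])"
        using r by simp
      thus ?thesis
      proof
        assume "r \<in> set (if b then map (Cons 4) (fr b vs) else [])"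
        hence "b" "r \<in> set (map (Cons 4) (fr b vs))" by (auto split: if_splits)
        then obtain r' where "r = 4 # r'" "r' \<in> set (fr b vs)" by auto
        thus ?thesis using 2(2) True \<open>b\<close> by auto
      next
        assume "r \<in> set (if hz vs then map (\<lambda>r. 1#1#1#1#r) (fr b (drop 3 vs)) else [])"
        hence "hz vs" "r \<in> set (map (\<lambda>r. 1#1#1#1#r) (fr b (drop 3 vs)))" by (auto split: if_splits)
        then obtain r' where "r = 1#1#1#1# r'" "r' \<in> set (fr b (drop 3 vs))" by auto
        thus ?thesis using 2(3) True \<open>hz vs\<close> by auto
      qed
    qed
  qed
qed
lemma hz_iff: "hz vs = (\<exists>r. vs = 0#0#0#r)"
proof
  assume "hz vs"
  hence h: "3 \<le> length vs" "vs!0 = 0" "vs!1 = 0" "vs!2 = 0" unfolding hz_def by auto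
  obtain a vs1 where v1: "vs = a # vs1" using h(1) by (cases vs) auto
  obtain b vs2 where v2: "vs1 = b # vs2" using h(1) v1 by (cases vs1) auto
  obtain c vs3 where v3: "vs2 = c # vs3" using h(1) v1 v2 by (cases vs2) auto
  show "\<exists>r. vs = 0#0#0#r" using h v1 v2 v3 by auto
qed (auto simp: hz_def)

lemma lexmin_pt:
  assumes "\<forall>v\<in>set pre. v \<noteq> 0" "(x,y) \<in> reg y0 (pre @ 0 # vs) m"
  shows "y0 < y \<or> (y = y0 \<and> length pre \<le> x)"
proof (cases "y0 < y")
  case False
  have y: "y = y0" "(pre @ 0 # vs) ! x = 0" using assms(2) False unfolding reg_def by auto
  show ?thesis
  proof (rule ccontr)
    assume "\<not> (y0 < y \<or> y = y0 \<and> length pre \<le> x)"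
    hence "x < length pre" using y by auto
    hence "pre ! x = 0" using y by (simp add: nth_append)
    thus False using assms(1) \<open>x < length pre\<close> nth_mem by metis
  qed
qed simp

lemma lexmin_reg:
  assumes "\<forall>v\<in>set pre. v \<noteq> 0" "y0 < m"
  shows "(length pre, y0) \<in> reg y0 (pre @ 0 # vs) m"
    "\<forall>(x,y)\<in>reg y0 (pre @ 0 # vs) m. y0 < y \<or> (y = y0 \<and> length pre \<le> x)"
proof -
  show "(length pre, y0) \<in> reg y0 (pre @ 0 # vs) m" using assms unfolding reg_def by (auto simp: nth_append)
  show "\<forall>(x,y)\<in>reg y0 (pre @ 0 # vs) m. y0 < y \<or> (y = y0 \<and> length pre \<le> x)"
    using lexmin_pt[OF assms(1)] by blast
qed

lemma regV: 
  "(rect (length pre) y0 1 4 \<subseteq> reg y0 (pre @ 0 # vs) m) = (y0 + 4 \<le> m)"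
  "reg y0 (pre @ 0 # vs) m - rect (length pre) y0 1 4 = reg y0 (pre @ 4 # vs) m"
proof -
  show "(rect (length pre) y0 1 4 \<subseteq> reg y0 (pre @ 0 # vs) m) = (y0 + 4 \<le> m)"
  proof
    assume "rect (length pre) y0 1 4 \<subseteq> reg y0 (pre @ 0 # vs) m"
    moreover have "(length pre, y0 + 3) \<in> rect (length pre) y0 1 4" unfolding rect_def by auto
    ultimately show "y0 + 4 \<le> m" unfolding reg_def by auto
  next
    assume "y0 + 4 \<le> m" thus "rect (length pre) y0 1 4 \<subseteq> reg y0 (pre @ 0 # vs) m"
      unfolding rect_def reg_def by (auto simp: nth_append)
  qed
  show "reg y0 (pre @ 0 # vs) m - rect (length pre) y0 1 4 = reg y0 (pre @ 4 # vs) m"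
  proof -
    have "\<And>x y. ((x,y) \<in> reg y0 (pre @ 0 # vs) m \<and> (x,y) \<notin> rect (length pre) y0 1 4) = ((x,y) \<in> reg y0 (pre @ 4 # vs) m)"
    proof -
      fix x y
      show "?thesis x y"
      proof (cases "x < length pre")
        case True thus ?thesis unfolding reg_def rect_def by (auto simp: nth_append)
      next
        case False
        then obtain k where x: "x = length pre + k" by (metis le_iff_add not_less)
        show ?thesis
        proof (cases k)
          case 0 thus ?thesis unfolding reg_def rect_def x by (auto simp: nth_append)
        next
          case (Suc j) thus ?thesis unfolding reg_def rect_def x by (auto simp: nth_append)
        qed
      qed
    qed
    thus ?thesis by auto
  qed
qed

lemma regH:
  assumes "y0 < m"
  shows "(rect (length pre) y0 4 1 \<subseteq> reg y0 (pre @ 0 # vs) m) = hz vs"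
    "hz vs \<Longrightarrow> reg y0 (pre @ 0 # vs) m - rect (length pre) y0 4 1 = reg y0 (pre @ 1#1#1#1# drop 3 vs) m"
proof -
  show "(rect (length pre) y0 4 1 \<subseteq> reg y0 (pre @ 0 # vs) m) = hz vs"
  proof
    assume A: "rect (length pre) y0 4 1 \<subseteq> reg y0 (pre @ 0 # vs) m"
    have "(length pre + 1, y0) \<in> rect (length pre) y0 4 1" "(length pre + 2, y0) \<in> rect (length pre) y0 4 1"
      "(length pre + 3, y0) \<in> rect (length pre) y0 4 1" unfolding rect_def by auto
    hence "(length pre + 1, y0) \<in> reg y0 (pre @ 0 # vs) m" "(length pre + 2, y0) \<in> reg y0 (pre @ 0 # vs) m"
      "(length pre + 3, y0) \<in> reg y0 (pre @ 0 # vs) m" using A by auto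
    hence "1 < length (0#vs)" "(0#vs) ! 1 = 0" "2 < length (0#vs)" "(0#vs) ! 2 = 0" "3 < length (0#vs)" "(0#vs) ! 3 = 0"
      unfolding reg_def by (auto simp: nth_append)
    thus "hz vs" unfolding hz_def by (simp add: numeral_3_eq_3 numeral_2_eq_2)
  next
    assume "hz vs"
    then obtain r where vs: "vs = 0#0#0#r" using hz_iff by blast
    show "rect (length pre) y0 4 1 \<subseteq> reg y0 (pre @ 0 # vs) m"
    proof
      fix p assume "p \<in> rect (length pre) y0 4 1"
      then obtain k where p: "p = (length pre + k, y0)" "k < 4" unfolding rect_def
        by (auto simp: le_iff_add)
      have "k = 0 \<or> k = 1 \<or> k = 2 \<or> k = 3" using p(2) by auto
      hence "(0#0#0#0#r) ! k = 0" by auto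
      thus "p \<in> reg y0 (pre @ 0 # vs) m" using p assms unfolding reg_def vs by (auto simp: nth_append)
    qed
  qed
  assume "hz vs"
  then obtain r where vs: "vs = 0#0#0#r" using hz_iff by blast
  show "reg y0 (pre @ 0 # vs) m - rect (length pre) y0 4 1 = reg y0 (pre @ 1#1#1#1# drop 3 vs) m"
  proof -
    have "\<And>x y. ((x,y) \<in> reg y0 (pre @ 0 # vs) m \<and> (x,y) \<notin> rect (length pre) y0 4 1) = ((x,y) \<in> reg y0 (pre @ 1#1#1#1# drop 3 vs) m)"
    proof -
      fix x y
      show "?thesis x y"
      proof (cases "x < length pre")
        case True thus ?thesis unfolding reg_def rect_def vs by (auto simp: nth_append)
      next
        case False
        then obtain k where x: "x = length pre + k" by (metis le_iff_add not_less)
        show ?thesis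
        proof (cases "k < 4")
          case True
          hence "k = 0 \<or> k = 1 \<or> k = 2 \<or> k = 3" by auto
          thus ?thesis unfolding reg_def rect_def vs x by (auto simp: nth_append)
        next
          case False
          then obtain j where "k = 4 + j" by (metis le_iff_add not_less)
          thus ?thesis unfolding reg_def rect_def vs x by (auto simp: nth_append)
        qed
      qed
    qed
    thus ?thesis by auto
  qed
qed


lemma prof:
  "b = (y0 + 4 \<le> m) \<Longrightarrow> \<forall>v\<in>set pre. v \<noteq> 0 \<Longrightarrow> y0 < m \<Longrightarrow>
   G y0 (pre @ vs) m = sum_list (map (\<lambda>r. G y0 (pre @ r) m) (fr b vs))"
proof (induction b vs arbitrary: pre rule: fr.induct)
  case (1 b) thus ?case by simp
next
  case (2 b v vs)
  show ?case
  proof (cases "v = 0")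
    case False
    have "G y0 ((pre @ [v]) @ vs) m = sum_list (map (\<lambda>r. G y0 ((pre @ [v]) @ r) m) (fr b vs))"
      using 2(1)[of "pre @ [v]"] False "2.prems" by auto
    thus ?thesis using False by (simp add: comp_def)
  next
    case True
    define R where "R = reg y0 (pre @ 0 # vs) m"
    have lx: "(length pre, y0) \<in> R" "\<forall>(x,y)\<in>R. y0 < y \<or> (y = y0 \<and> length pre \<le> x)"
      using lexmin_reg[OF "2.prems"(2,3)] unfolding R_def by auto
    have rec: "card (tilings R) = (if rect (length pre) y0 1 4 \<subseteq> R then card (tilings (R - rect (length pre) y0 1 4)) else 0)
          + (if rect (length pre) y0 4 1 \<subseteq> R then card (tilings (R - rect (length pre) y0 4 1)) else 0)"
      by (rule lexmin_rec[OF _ lx]) (simp add: R_def reg_finite)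
    have V: "(if rect (length pre) y0 1 4 \<subseteq> R then card (tilings (R - rect (length pre) y0 1 4)) else 0)
       = (if b then sum_list (map (\<lambda>r. G y0 (pre @ r) m) (map (Cons 4) (fr b vs))) else 0)"
    proof (cases b)
      case True
      have "G y0 ((pre @ [4]) @ vs) m = sum_list (map (\<lambda>r. G y0 ((pre @ [4]) @ r) m) (fr b vs))"
        using 2(2)[of "pre @ [4]"] True \<open>v = 0\<close> "2.prems" by auto
      thus ?thesis using True "2.prems"(1) regV[where pre=pre and vs=vs] unfolding R_def G_def by (simp add: comp_def)
    next
      case False
      thus ?thesis using "2.prems"(1) regV[where pre=pre and vs=vs] unfolding R_def by simp
    qed
    have H: "(if rect (length pre) y0 4 1 \<subseteq> R then card (tilings (R - rect (length pre) y0 4 1)) else 0)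
       = (if hz vs then sum_list (map (\<lambda>r. G y0 (pre @ r) m) (map (\<lambda>r. 1#1#1#1#r) (fr b (drop 3 vs)))) else 0)"
    proof (cases "hz vs")
      case True
      have "G y0 ((pre @ [1,1,1,1]) @ drop 3 vs) m = sum_list (map (\<lambda>r. G y0 ((pre @ [1,1,1,1]) @ r) m) (fr b (drop 3 vs)))"
        using 2(3)[of "pre @ [1,1,1,1]"] True \<open>v = 0\<close> "2.prems" by auto
      thus ?thesis using True regH[OF "2.prems"(3), where pre=pre and vs=vs] unfolding R_def G_def by (simp add: comp_def)
    next
      case False
      thus ?thesis using regH[OF "2.prems"(3), where pre=pre and vs=vs] unfolding R_def by simp
    qed
    have "G y0 (pre @ v # vs) m = card (tilings R)" unfolding R_def G_def True by simp
    also have "\<dots> = sum_list (map (\<lambda>r. G y0 (pre @ r) m) (fr b (v # vs)))"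
      unfolding rec V H using True by simp
    finally show ?thesis .
  qed
qed

lemma fr_pos: "r \<in> set (fr b s) \<Longrightarrow> \<forall>v\<in>set r. v \<noteq> 0" using fr_pos' by blast

fun cnt :: "nat \<Rightarrow> nat list \<Rightarrow> nat" where
  "cnt 0 s = 1"
| "cnt (Suc k) s = sum_list (map (\<lambda>r. cnt k (map (\<lambda>v. v - 1) r)) (fr (4 \<le> Suc k) s))"

lemma reg_shift: "\<forall>v\<in>set r. v \<noteq> 0 \<Longrightarrow> reg y0 r m = reg (Suc y0) (map (\<lambda>v. v - 1) r) m"
proof -
  assume A: "\<forall>v\<in>set r. v \<noteq> 0"
  have "\<And>x y. ((x,y) \<in> reg y0 r m) = ((x,y) \<in> reg (Suc y0) (map (\<lambda>v. v - 1) r) m)"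
  proof -
    fix x y
    show "?thesis x y"
    proof (cases "x < length r")
      case True
      hence "r ! x \<noteq> 0" using A nth_mem by blast
      hence "Suc y0 + (map (\<lambda>v. v - 1) r) ! x = y0 + r ! x" using True by simp
      thus ?thesis using True unfolding reg_def by simp
    next
      case False thus ?thesis unfolding reg_def by simp
    qed
  qed
  thus ?thesis by auto
qed

lemma G_cnt: "G y0 s (y0 + k) = cnt k s"
proof (induction k arbitrary: y0 s)
  case 0
  have "reg y0 s y0 = {}" unfolding reg_def by auto
  thus ?case unfolding G_def by (simp add: tilings_empty)
next
  case (Suc k)
  have "G y0 s (y0 + Suc k) = G y0 ([] @ s) (y0 + Suc k)" by simp
  also have "\<dots> = sum_list (map (\<lambda>r. G y0 ([] @ r) (y0 + Suc k)) (fr (4 \<le> Suc k) s))"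
    by (rule prof) auto
  also have "\<dots> = sum_list (map (\<lambda>r. cnt k (map (\<lambda>v. v - 1) r)) (fr (4 \<le> Suc k) s))"
  proof (rule arg_cong[where f=sum_list], rule map_cong[OF refl])
    fix r assume "r \<in> set (fr (4 \<le> Suc k) s)"
    hence "reg y0 r (y0 + Suc k) = reg (Suc y0) (map (\<lambda>v. v - 1) r) (Suc y0 + k)"
      using reg_shift fr_pos by simp
    thus "G y0 ([] @ r) (y0 + Suc k) = cnt k (map (\<lambda>v. v - 1) r)"
      using Suc.IH[of "Suc y0"] unfolding G_def by simp
  qed
  finally show ?case by simp
qed

lemma tiling_card: assumes "T \<in> tilings R" "finite R" shows "card R = 4 * card T"
proof -
  have "T \<subseteq> Pow R" using assms(1) unfolding tilings_def by auto
  hence fT: "finite T" using assms(2) finite_subset by blast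
  have pd: "pairwise disjnt T" using assms(1) unfolding tilings_def pairwise_def disjnt_def by blast
  have "\<And>S. S \<in> T \<Longrightarrow> finite S" using \<open>T \<subseteq> Pow R\<close> assms(2) finite_subset by blast
  hence "card (\<Union>T) = sum card T" using card_Union_disjoint[OF pd] by blast
  also have "\<dots> = sum (\<lambda>_. 4) T" using assms(1) tile_card unfolding tilings_def by (intro sum.cong) auto
  also have "\<dots> = 4 * card T" by simp
  finally show ?thesis using assms(1) unfolding tilings_def by simp
qed

lemma rect_reg: "{0..<8} \<times> {0..<n} = reg 0 (replicate 8 0) n"
proof -
  have I: "\<And>x y. ((x,y) \<in> {0..<8} \<times> {0..<n}) = ((x,y) \<in> reg 0 (replicate 8 0) n)"
    unfolding reg_def by (auto simp: nth_replicate)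
  show ?thesis
  proof (rule set_eqI)
    fix p :: "nat \<times> nat"
    obtain x y where "p = (x,y)" by (cases p)
    thus "(p \<in> {0..<8} \<times> {0..<n}) = (p \<in> reg 0 (replicate 8 0) n)" using I by blast
  qed
qed

lemma is_tiling_iff: "is_tiling 1 4 8 n T = (T \<in> tilings (reg 0 (replicate 8 0) n))"
  unfolding is_tiling_def tilings_def rect_reg by simp

lemma T14_even: "T14_8 (2*n) = cnt n (replicate 8 (0::nat))"
proof -
  have eq: "{T. is_tiling 1 4 8 n T \<and> card T = 2 * n} = tilings (reg 0 (replicate 8 0) n)"
  proof -
    have c: "card (reg 0 (replicate 8 0) n) = 8 * n" unfolding rect_reg[symmetric] by simp
    { fix T assume T: "T \<in> tilings (reg 0 (replicate 8 0) n)"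
      hence "card T = 2 * n" using tiling_card[OF T reg_finite] c by simp }
    thus ?thesis unfolding is_tiling_iff by blast
  qed
  have "T14_8 (2*n) = card {T. is_tiling 1 4 8 n T \<and> card T = 2 * n}" unfolding T14_8_def by simp
  also have "\<dots> = G 0 (replicate 8 0) n" unfolding eq G_def ..
  also have "\<dots> = cnt n (replicate 8 0)" using G_cnt[of 0 _ n] by simp
  finally show ?thesis .
qed

lemma T14_odd: "odd N \<Longrightarrow> T14_8 N = 0" unfolding T14_8_def by simp


definition SL :: "nat list list" where
  "SL = [[0, 0, 0, 0, 0, 0, 0, 0], [3, 3, 3, 3, 3, 3, 3, 3], [3, 3, 3, 3, 0, 0, 0, 0], [3, 3, 3, 0, 0, 0, 0, 3], [3, 3, 0, 0, 0, 0, 3, 3], [3, 0, 0, 0, 0, 3, 3, 3], [0, 0, 0, 0, 3, 3, 3, 3], [2, 2, 2, 2, 2, 2, 2, 2], [2, 2, 2, 2, 3, 3, 3, 3], [2, 2, 2, 2, 0, 0, 0, 0], [2, 2, 2, 3, 3, 3, 3, 2], [2, 2, 2, 0, 0, 0, 0, 2], [2, 2, 3, 3, 3, 3, 2, 2], [2, 2, 0, 0, 0, 0, 2, 2], [2, 3, 3, 3, 3, 2, 2, 2], [2, 0, 0, 0, 0, 2, 2, 2], [3, 3, 3, 3, 2, 2, 2, 2], [0, 0, 0, 0, 2, 2, 2, 2], [1, 1, 1, 1, 1, 1, 1, 1], [1, 1, 1, 1, 2, 2, 2, 2], [1, 1, 1, 1, 3, 3, 3, 3], [1, 1, 1, 1,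 0, 0, 0, 0], [1, 1, 1, 2, 2, 2, 2, 1], [1, 1, 1, 3, 3, 3, 3, 1], [1, 1, 1, 0, 0, 0, 0, 1], [1, 1, 2, 2, 2, 2, 1, 1], [1, 1, 3, 3, 3, 3, 1, 1], [1, 1, 0, 0, 0, 0, 1, 1], [1, 2, 2, 2, 2, 1, 1, 1], [1, 3, 3, 3, 3, 1, 1, 1], [1, 0, 0, 0, 0, 1, 1, 1], [2, 2, 2, 2, 1, 1, 1, 1], [3, 3, 3, 3, 1, 1, 1, 1], [0, 0, 0, 0, 1, 1, 1, 1], [0, 0, 0, 1, 1, 1, 1, 0], [0, 0, 0, 2, 2, 2, 2, 0], [0, 0, 0, 3, 3, 3, 3, 0], [0, 0, 1, 1, 1, 1, 0, 0], [0, 0, 2, 2, 2, 2, 0, 0], [0, 0, 3, 3, 3, 3, 0, 0], [0, 1, 1, 1, 1, 0, 0, 0], [0, 2, 2, 2, 2, 0, 0, 0], [0, 3, 3, 3, 3, 0, 0, 0], [3, 3, 3, 1, 1, 1, 1, 3], [3, 3, 3, 2, 2, 2, 2, 3], [3, 3, 1, 1, 1, 1, 3, 3], [3, 3, 2, 2, 2, 2, 3, 3], [3, 1, 1, 1, 1, 3, 3, 3], [3, 2, 2, 2, 2, 3, 3, 3], [2, 2, 2, 1, 1, 1, 1, 2], [2, 2, 1, 1, 1, 1, 2, 2], [2, 1, 1, 1, 1, 2, 2, 2]]"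

definition SI :: "nat list list" where
  "SI = [[1, 2, 3, 4, 5, 6, 0], [7], [8, 9], [10, 11], [12, 13], [14, 15], [16, 17], [18], [19], [20, 21], [22], [23, 24], [25], [26, 27], [28], [29, 30], [31], [32, 33], [0], [33], [17], [6, 0], [34], [35], [36, 0], [37], [38], [39, 0], [40], [41], [42, 0], [21], [9], [2, 0], [3], [43], [44], [4], [45], [46], [5], [47], [48], [11], [49], [13], [50], [15], [51], [24], [27], [30]]"

definition VV :: "nat list list" where
  "VV = [[1, 1, 1, 1, 1, 1, 1, 1, 1, 1, 0, 1, 0, 1, 0, 1, 1, 1, 1, 1, 1, 1, 0, 0, 1, 0, 0, 1, 0, 0, 1, 1, 1, 1, 0, 0, 0, 0, 0, 0, 0, 0, 0, 1, 1, 1, 1, 1, 1, 1, 1, 1], [7, 1, 2, 1, 1, 1, 2, 1, 1, 2, 0, 1, 0, 1, 0, 1, 1, 2, 1, 1, 1, 2, 0, 0, 1, 0, 0, 1, 0, 0, 1, 1, 1, 2, 1, 1, 1, 1, 1, 1, 1, 1, 1, 1, 1, 1, 1, 1, 1, 1, 1, 1], [15, 1, 3, 1, 1, 1, 3, 1, 1, 3, 0, 1, 0, 1, 0, 1, 1, 3, 7, 2, 2, 9, 1, 1, 8, 1, 1, 8, 1, 1, 8, 2, 2, 9, 1, 1, 1, 1, 1, 1, 1, 1, 1, 1, 1, 1, 1, 1, 1, 1, 1, 1], [25, 1, 4, 1, 1, 1, 4, 7, 2, 11, 1, 9, 1, 9, 1, 9, 2, 11, 15, 9, 3, 18, 1,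 1, 16, 1, 1, 16, 1, 1, 16, 9, 3, 18, 1, 1, 1, 1, 1, 1, 1, 1, 1, 1, 1, 1, 1, 1, 1, 8, 8, 8], [37, 7, 13, 10, 10, 10, 13, 15, 9, 21, 1, 17, 1, 17, 1, 17, 9, 21, 25, 18, 11, 29, 1, 1, 26, 1, 1, 26, 1, 1, 26, 18, 11, 29, 1, 1, 1, 1, 1, 1, 1, 1, 1, 9, 8, 9, 8, 9, 8, 16, 16, 16], [100, 15, 30, 18, 18, 18, 30, 25, 18, 40, 1, 27, 1, 27, 1, 27, 18, 40, 37, 29, 21, 50, 1, 1, 38, 1, 1, 38, 1, 1, 38, 29, 21, 50, 10, 9, 8, 10, 9, 8, 10, 9, 8, 17, 16, 17, 16, 17, 16, 26, 26, 26], [229, 25, 58, 28, 28, 28, 58, 37, 29, 71, 1, 39, 1, 39, 1, 39, 29, 71, 100, 50, 40, 130, 10, 9, 108, 10, 9, 108, 10, 9, 108, 50, 40, 130, 18, 17, 16, 18, 17, 16, 18, 17, 16, 27, 26, 27, 26, 27, 26, 38, 38, 38], [454, 37, 100, 40, 40, 40, 100, 100, 50, 170, 10, 117, 10, 117, 10, 117, 50, 170, 229, 130, 71, 287, 18, 17, 245, 18, 17, 245, 18, 17, 245, 130, 71, 287, 28, 27, 26, 28, 27, 26, 28, 27, 26, 39, 38, 39, 38, 39, 38, 108, 108, 108], [811, 100, 220, 127, 127, 127, 220, 229, 130, 358, 18, 262, 18, 262, 18, 262, 130, 358, 454, 287, 170, 554, 28, 27, 480, 28, 27, 480, 28, 27,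 480, 287, 170, 554, 40, 39, 38, 40, 39, 38, 40, 39, 38, 117, 108, 117, 108, 117, 108, 245, 245, 245], [1732, 229, 488, 280, 280, 280, 488, 454, 287, 724, 28, 507, 28, 507, 28, 507, 287, 724, 811, 554, 358, 1031, 40, 39, 849, 40, 39, 849, 40, 39, 849, 554, 358, 1031, 127, 117, 108, 127, 117, 108, 127, 117, 108, 262, 245, 262, 245, 262, 245, 480, 480, 480], [3777, 454, 1011, 535, 535, 535, 1011, 811, 554, 1389, 40, 888, 40, 888, 40, 888, 554, 1389, 1732, 1031, 724, 2220, 127, 117, 1840, 127, 117, 1840, 127, 117, 1840, 1031, 724, 2220, 280, 262, 245, 280, 262, 245, 280, 262, 245, 507, 480, 507, 480, 507, 480, 849, 849, 849], [7858, 811, 1943, 928, 928, 928, 1943, 1732, 1031, 2944, 127, 1957, 127, 1957, 127, 1957, 1031, 2944, 3777, 2220, 1389, 4788, 280, 262, 4022, 280, 262, 4022, 280, 262, 4022, 2220, 1389, 4788, 535, 507, 480, 535, 507, 480, 535, 507, 480, 888, 849, 888, 849, 888, 849, 1840, 1840, 1840], [15339, 1732, 3975, 2084, 2084, 2084, 3975, 3777, 2220, 6177, 280, 4284, 280, 4284, 280, 4284, 2220, 6177, 7858, 4788, 2944, 9801, 535, 507, 8338, 535, 507, 8338, 535, 507, 8338, 4788, 2944, 9801, 928, 888, 849, 928, 888, 849, 928, 888, 849, 1957, 1840, 1957, 1840, 1957, 1840, 4022, 4022, 4022], [31273, 3777, 8397, 4564, 4564, 4564, 8397, 7858, 4788,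 12745, 535, 8845, 535, 8845, 535, 8845, 4788, 12745, 15339, 9801, 6177, 19314, 928, 888, 16188, 928, 888, 16188, 928, 888, 16188, 9801, 6177, 19314, 2084, 1957, 1840, 2084, 1957, 1840, 2084, 1957, 1840, 4284, 4022, 4284, 4022, 4284, 4022, 8338, 8338, 8338], [65536, 7858, 17533, 9380, 9380, 9380, 17533, 15339, 9801, 25491, 928, 17076, 928, 17076, 928, 17076, 9801, 25491, 31273, 19314, 12745, 39670, 2084, 1957, 33113, 2084, 1957, 33113, 2084, 1957, 33113, 19314, 12745, 39670, 4564, 4284, 4022, 4564, 4284, 4022, 4564, 4284, 4022, 8845, 8338, 8845, 8338, 8845, 8338, 16188, 16188, 16188], [136600, 15339, 35292, 18004, 18004, 18004, 35292, 31273, 19314, 52415, 2084, 35070, 2084, 35070, 2084, 35070, 19314, 52415, 65536, 39670, 25491, 83069, 4564, 4284, 69558, 4564, 4284, 69558, 4564, 4284, 69558, 39670, 25491, 83069, 9380, 8845, 8338, 9380, 8845, 8338, 9380, 8845, 8338, 17076, 16188, 17076, 16188, 17076, 16188, 33113, 33113, 33113], [276535, 31273, 71729, 37154, 37154, 37154, 71729, 65536, 39670, 108560, 4564, 73842, 4564, 73842, 4564, 73842, 39670, 108560, 136600, 83069, 52415, 171892, 9380, 8845, 144938, 9380, 8845, 144938, 9380, 8845, 144938, 83069, 52415, 171892, 18004, 17076, 16188, 18004, 17076, 16188, 18004, 17076, 16188, 35070, 33113, 35070, 33113, 35070, 33113, 69558, 69558, 69558], [562728, 65536, 148230, 78406,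 78406, 78406, 148230, 136600, 83069, 224307, 9380, 153783, 9380, 153783, 9380, 153783, 83069, 224307, 276535, 171892, 108560, 348264, 18004, 17076, 292723, 18004, 17076, 292723, 18004, 17076, 292723, 171892, 108560, 348264, 37154, 35070, 33113, 37154, 35070, 33113, 37154, 35070, 33113, 73842, 69558, 73842, 69558, 73842, 69558, 144938, 144938, 144938], [1159942, 136600, 307376, 163163, 163163, 163163, 307376, 276535, 171892, 456824, 18004, 309799, 18004, 309799, 18004, 309799, 171892, 456824, 562728, 348264, 224307, 710958, 37154, 35070, 595841, 37154, 35070, 595841, 37154, 35070, 595841, 348264, 224307, 710958, 78406, 73842, 69558, 78406, 73842, 69558, 78406, 73842, 69558, 153783, 144938, 153783, 144938, 153783, 144938, 292723, 292723, 292723], [2400783, 276535, 628716, 327803, 327803, 327803, 628716, 562728, 348264, 935265, 37154, 630911, 37154, 630911, 37154, 630911, 348264, 935265, 1159942, 710958, 456824, 1467318, 78406, 73842, 1229500, 78406, 73842, 1229500, 78406, 73842, 1229500, 710958, 456824, 1467318, 163163, 153783, 144938, 163163, 153783, 144938, 163163, 153783, 144938, 309799, 292723, 309799, 292723, 309799, 292723, 595841, 595841, 595841], [4918159, 562728, 1283529, 668065, 668065, 668065, 1283529, 1159942, 710958, 1924142, 78406, 1303342, 78406, 1303342, 78406, 1303342, 710958, 1924142, 2400783, 1467318, 935265, 3029499, 163163, 153783, 2545721, 163163, 153783, 2545721, 163163, 153783, 2545721, 1467318, 935265, 3029499, 327803, 309799, 292723, 327803, 309799, 292723, 327803, 309799,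 292723, 630911, 595841, 630911, 595841, 630911, 595841, 1229500, 1229500, 1229500], [10052140, 1159942, 2635100, 1381748, 1381748, 1381748, 2635100, 2400783, 1467318, 3964764, 163163, 2699504, 163163, 2699504, 163163, 2699504, 1467318, 3964764, 4918159, 3029499, 1924142, 6201688, 327803, 309799, 5210882, 327803, 309799, 5210882, 327803, 309799, 5210882, 3029499, 1924142, 6201688, 668065, 630911, 595841, 668065, 630911, 595841, 668065, 630911, 595841, 1303342, 1229500, 1303342, 1229500, 1303342, 1229500, 2545721, 2545721, 2545721], [20627526, 2400783, 5432082, 2862667, 2862667, 2862667, 5432082, 4918159, 3029499, 8125830, 327803, 5520681, 327803, 5520681, 327803, 5520681, 3029499, 8125830, 10052140, 6201688, 3964764, 12687240, 668065, 630911, 10647981, 668065, 630911, 10647981, 668065, 630911, 10647981, 6201688, 3964764, 12687240, 1381748, 1303342, 1229500, 1381748, 1303342, 1229500, 1381748, 1303342, 1229500, 2699504, 2545721, 2699504, 2545721, 2699504, 2545721, 5210882, 5210882, 5210882]]"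

definition qw :: "int list" where
  "qw = [1, -1, -1, 0, -9, 2, 8, 5, 16, 0, -13, -6, -13, -2, 10, 6, 6, 1, -5, -2, -1, 0, 1]"

definition pw :: "int list" where
  "pw = [1, 0, -1, -1, -4, 0, 4, 3, 6, 0, -6, -3, -4, 0, 4, 1, 1, 0, -1]"

definition alist :: "int list" where
  "alist = [1, 1, 1, 1, 7, 15, 25, 37, 100, 229, 454, 811, 1732, 3777, 7858, 15339, 31273, 65536, 136600, 276535, 562728, 1159942, 2400783, 4918159, 10052140, 20627526]"

lemma len: "length SL = 52" "length SI = 52" "length VV = 23" unfolding SL_def SI_def VV_def by simp_all

lemma tab: "map (\<lambda>s. map (map (\<lambda>v. v - 1)) (fr True s)) SL = map (map (nth SL)) SI"
  unfolding SL_def SI_def by (simp add: hz_def)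

lemma SIvalid: "\<forall>l\<in>set SI. \<forall>j\<in>set l. j < 52"
  unfolding SI_def by simp

lemma cnt_step:
  assumes "3 \<le> m" "i < 52"
  shows "cnt (Suc m) (SL!i) = sum_list (map (\<lambda>j. cnt m (SL!j)) (SI!i))"
proof -
  have "cnt (Suc m) (SL!i) = sum_list (map (cnt m) (map (map (\<lambda>v. v - 1)) (fr True (SL!i))))"
    using assms(1) by (simp add: comp_def)
  also have "map (map (\<lambda>v. v - 1)) (fr True (SL!i)) = map (nth SL) (SI!i)"
    using arg_cong[OF tab, where f="\<lambda>xs. xs ! i"] assms(2) len by simp
  finally show ?thesis by (simp add: comp_def)
qed

definition stp :: "nat list \<Rightarrow> nat list" where
  "stp v = (case v of [x0, x1, x2, x3, x4, x5, x6, x7, x8, x9, x10, x11, x12, x13, x14, x15, x16, x17, x18, x19, x20, x21, x22, x23, x24, x25, x26, x27, x28, x29, x30, x31, x32, x33, x34, x35, x36, x37, x38, x39, x40, x41, x42, x43, x44, x45, x46, x47, x48, x49, x50, x51] \<Rightarrow> [sum_list [x1, x2, x3, x4, x5, x6, x0], sum_list [x7], sum_list [x8, x9], sum_list [x10, x11], sum_list [x12, x13], sum_list [x14, x15], sum_list [x16, x17], sum_list [x18], sum_list [x19], sum_list [x20, x21], sum_list [x22], sum_list [x23, x24], sum_list [x25], sum_list [x26, x27], sum_list [x28], sum_list [x29, x30], sum_list [x31], sum_list [x32, x33], sum_list [x0], sum_list [x33], sum_list [x17], sum_list [x6, x0], sum_list [x34], sum_list [x35], sum_list [x36, x0], sum_list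 [x37], sum_list [x38], sum_list [x39, x0], sum_list [x40], sum_list [x41], sum_list [x42, x0], sum_list [x21], sum_list [x9], sum_list [x2, x0], sum_list [x3], sum_list [x43], sum_list [x44], sum_list [x4], sum_list [x45], sum_list [x46], sum_list [x5], sum_list [x47], sum_list [x48], sum_list [x11], sum_list [x49], sum_list [x13], sum_list [x50], sum_list [x15], sum_list [x51], sum_list [x24], sum_list [x27], sum_list [x30]] | _ \<Rightarrow> [])"

lemma stp_eq: assumes "length v = 52" shows "stp v = map (\<lambda>l. sum_list (map (nth v) l)) SI"
proof -
  have "v = map (nth v) [0..<52]" using map_nth[of v] assms by simp
  hence "stp v = stp (map (nth v) [0..<52])" by simp
  also have "\<dots> = map (\<lambda>l. sum_list (map (nth v) l)) SI"
    unfolding stp_def SI_def by (simp add: upt_rec numeral_eq_Suc)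
  finally show ?thesis .
qed

lemma VVstep: "map stp (take 22 VV) = drop 1 VV"
  unfolding VV_def stp_def by simp

lemma cnt1: "cnt 1 s = sum_list (map (\<lambda>r. cnt 0 (map (\<lambda>v. v - 1) r)) (fr False s))" by simp
lemma cnt2: "cnt 2 s = sum_list (map (\<lambda>r. cnt 1 (map (\<lambda>v. v - 1) r)) (fr False s))"
  by (simp add: numeral_2_eq_2)
lemma cnt3: "cnt 3 s = sum_list (map (\<lambda>r. cnt 2 (map (\<lambda>v. v - 1) r)) (fr False s))"
  by (simp add: numeral_3_eq_3 numeral_2_eq_2)

lemma VV0: "map (cnt 3) SL = VV ! 0"
  unfolding SL_def VV_def by (simp add: hz_def cnt1 cnt2 cnt3)


lemma VV_len: "\<forall>v\<in>set VV. length v = 52"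
  unfolding VV_def by simp

lemma VV_cnt: "j \<le> 22 \<Longrightarrow> i < 52 \<Longrightarrow> VV ! j ! i = cnt (3 + j) (SL ! i)"
proof (induction j arbitrary: i)
  case 0
  thus ?case using arg_cong[OF VV0, where f="\<lambda>xs. xs ! i"] len by simp
next
  case (Suc j)
  have j: "j < 22" using Suc.prems by simp
  have "VV ! Suc j = stp (VV ! j)"
    using arg_cong[OF VVstep, where f="\<lambda>xs. xs ! j"] j len by simp
  also have "\<dots> = map (\<lambda>l. sum_list (map (nth (VV ! j)) l)) SI"
    using stp_eq VV_len j len by (simp add: nth_mem)
  finally have "VV ! Suc j ! i = sum_list (map (nth (VV ! j)) (SI ! i))"
    using Suc.prems len by simp
  also have "\<dots> = sum_list (map (\<lambda>l. cnt (3 + j) (SL ! l)) (SI ! i))"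
  proof (rule arg_cong[where f=sum_list], rule map_cong[OF refl])
    fix l assume "l \<in> set (SI ! i)"
    hence "l < 52" using SIvalid Suc.prems len nth_mem by metis
    thus "VV ! j ! l = cnt (3 + j) (SL ! l)" using Suc.IH j by simp
  qed
  also have "\<dots> = cnt (Suc (3 + j)) (SL ! i)" using cnt_step[of "3 + j" i] Suc.prems by simp
  finally show ?case by simp
qed

fun addsc :: "int \<Rightarrow> nat list \<Rightarrow> int list \<Rightarrow> int list" where
  "addsc c (x # xs) (a # as) = (c * int x + a) # addsc c xs as"
| "addsc c _ _ = []"

lemma addsc_len: "length xs = length as \<Longrightarrow> length (addsc c xs as) = length xs"
  by (induction c xs as rule: addsc.induct) auto

lemma addsc_nth: "length xs = length as \<Longrightarrow> i < length xs \<Longrightarrow> addsc c xs as ! i = c * int (xs ! i) + as ! i"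
proof (induction c xs as arbitrary: i rule: addsc.induct)
  case (1 c x xs a as) thus ?case by (cases i) auto
qed auto

fun comb :: "int list \<Rightarrow> nat list list \<Rightarrow> int list" where
  "comb (c # cs) (v # vs) = addsc c v (comb cs vs)"
| "comb _ _ = replicate 52 0"

lemma comb_len: "\<forall>v\<in>set vs. length v = 52 \<Longrightarrow> length (comb cs vs) = 52"
  by (induction cs vs rule: comb.induct) (auto simp: addsc_len)

lemma comb_nth: "length cs = length vs \<Longrightarrow> \<forall>v\<in>set vs. length v = 52 \<Longrightarrow> i < 52 \<Longrightarrow>
   comb cs vs ! i = (\<Sum>k<length cs. cs ! k * int (vs ! k ! i))"
proof (induction cs vs rule: comb.induct)
  case (1 c cs v vs)
  have "comb (c # cs) (v # vs) ! i = c * int (v ! i) + comb cs vs ! i"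
    using 1 comb_len[of vs cs] by (simp add: addsc_nth)
  also have "\<dots> = c * int (v ! i) + (\<Sum>k<length cs. cs ! k * int (vs ! k ! i))" using 1 by simp
  also have "\<dots> = (\<Sum>k<length (c # cs). (c # cs) ! k * int ((v # vs) ! k ! i))"
    by (simp only: length_Cons sum.lessThan_Suc_shift) simp
  finally show ?case .
qed auto

lemma rep52: "replicate 52 (0::int) = [0, 0, 0, 0, 0, 0, 0, 0, 0, 0, 0, 0, 0, 0, 0, 0, 0, 0, 0, 0, 0, 0, 0, 0, 0, 0, 0, 0, 0, 0, 0, 0, 0, 0, 0, 0, 0, 0, 0, 0, 0, 0, 0, 0, 0, 0, 0, 0, 0, 0, 0, 0]"
  by (simp add: numeral_eq_Suc)

lemma base_check: "comb qw (rev VV) = replicate 52 0"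
  unfolding qw_def VV_def by (simp add: rep52)

lemma sum_swap_list: "(\<Sum>k\<in>K. c k * int (sum_list (map (g k) xs))) = sum_list (map (\<lambda>l. \<Sum>k\<in>K. c k * int (g k l)) xs)"
  by (induction xs) (simp_all add: sum.distrib distrib_left)

lemma len_qw: "length qw = 23" unfolding qw_def by simp

lemma vrec: "3 \<le> n \<Longrightarrow> i < 52 \<Longrightarrow> (\<Sum>k<23. qw ! k * int (cnt (n + 22 - k) (SL ! i))) = 0"
proof (induction n arbitrary: i rule: dec_induct)
  case base
  have "comb qw (rev VV) ! i = (\<Sum>k<23. qw ! k * int (rev VV ! k ! i))"
    using comb_nth[of qw "rev VV" i] len_qw len VV_len base by simp
  also have "\<dots> = (\<Sum>k<23. qw ! k * int (cnt (3 + 22 - k) (SL ! i)))"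
  proof (rule sum.cong[OF refl])
    fix k assume "k \<in> {..<23::nat}"
    hence k: "k < 23" by simp
    hence "rev VV ! k = VV ! (22 - k)" using len by (simp add: rev_nth)
    thus "qw ! k * int (rev VV ! k ! i) = qw ! k * int (cnt (3 + 22 - k) (SL ! i))"
      using VV_cnt[of "22 - k" i] base k by simp
  qed
  finally show ?case using base_check base by simp
next
  case (step n)
  have "(\<Sum>k<23. qw ! k * int (cnt (Suc n + 22 - k) (SL ! i))) =
        (\<Sum>k<23. qw ! k * int (sum_list (map (\<lambda>l. cnt (n + 22 - k) (SL ! l)) (SI ! i))))"
  proof (rule sum.cong[OF refl])
    fix k assume "k \<in> {..<23::nat}"
    hence "Suc n + 22 - k = Suc (n + 22 - k)" "3 \<le> n + 22 - k" using step by auto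
    thus "qw ! k * int (cnt (Suc n + 22 - k) (SL ! i)) =
        qw ! k * int (sum_list (map (\<lambda>l. cnt (n + 22 - k) (SL ! l)) (SI ! i)))"
      using cnt_step step by simp
  qed
  also have "\<dots> = sum_list (map (\<lambda>l. \<Sum>k<23. qw ! k * int (cnt (n + 22 - k) (SL ! l))) (SI ! i))"
    by (rule sum_swap_list)
  also have "\<dots> = sum_list (map (\<lambda>l. 0) (SI ! i))"
  proof (rule arg_cong[where f=sum_list], rule map_cong[OF refl])
    fix l assume "l \<in> set (SI ! i)"
    hence "l < 52" using SIvalid step len nth_mem by metis
    thus "(\<Sum>k<23. qw ! k * int (cnt (n + 22 - k) (SL ! l))) = 0" using step.IH by simp
  qed
  finally show ?case by simp
qed

lemma rep8: "replicate 8 (0::nat) = [0,0,0,0,0,0,0,0]" by (simp add: numeral_eq_Suc)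

lemma SL0: "SL ! 0 = replicate 8 0" unfolding SL_def rep8 by simp

lemma alist_ok: "n < 26 \<Longrightarrow> alist ! n = int (cnt n (replicate 8 0))"
proof -
  assume n: "n < 26"
  show ?thesis
  proof (cases "n < 3")
    case True
    hence "n = 0 \<or> n = 1 \<or> n = 2" by auto
    thus ?thesis unfolding alist_def rep8 by (auto simp: cnt2 hz_def)
  next
    case False
    have ch: "map (\<lambda>v. int (v ! 0)) VV = drop 3 alist" unfolding VV_def alist_def by simp
    have la: "length alist = 26" unfolding alist_def by simp
    have "alist ! n = (drop 3 alist) ! (n - 3)" using False n la by (simp add: nth_drop)
    also have "\<dots> = int (VV ! (n - 3) ! 0)" unfolding ch[symmetric] using False n len by simp
    also have "\<dots> = int (cnt n (replicate 8 0))" using VV_cnt[of "n - 3" 0] False n SL0 by simp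
    finally show ?thesis .
  qed
qed


definition sub2 :: "'a::comm_ring_1 fps \<Rightarrow> 'a fps" where
  "sub2 f = Abs_fps (\<lambda>N. if even N then f $ (N div 2) else 0)"

lemma sub2_nth: "sub2 f $ N = (if even N then f $ (N div 2) else 0)"
  unfolding sub2_def by simp

lemma sub2_add: "sub2 (f + g) = sub2 f + sub2 g"
  by (rule fps_ext) (simp add: sub2_nth)

lemma sub2_diff: "sub2 (f - g) = sub2 f - sub2 g"
  by (rule fps_ext) (simp add: sub2_nth)

lemma sub2_1: "sub2 1 = 1"
  by (rule fps_ext) (auto simp: sub2_nth)

lemma sub2_numeral: "sub2 (numeral k) = numeral k"
  by (rule fps_ext) (auto simp: sub2_nth fps_numeral_nth)

lemma sub2_X: "sub2 fps_X = fps_X ^ 2"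
  by (rule fps_ext) (auto simp: sub2_nth)

lemma sub2_mult: "sub2 (f * g) = sub2 f * sub2 g"
proof (rule fps_ext)
  fix N
  define h where "h i = (if even i then f $ (i div 2) else 0) * (if even (N - i) then g $ ((N - i) div 2) else 0)" for i
  have R: "(sub2 f * sub2 g) $ N = (\<Sum>i=0..N. h i)" unfolding fps_mult_nth h_def sub2_nth ..
  show "sub2 (f * g) $ N = (sub2 f * sub2 g) $ N"
  proof (cases "even N")
    case True
    then obtain n where N: "N = 2 * n" by blast
    have "(\<Sum>i=0..N. h i) = (\<Sum>i\<in>(\<lambda>j. 2 * j) ` {0..n}. h i)"
    proof (rule sum.mono_neutral_right)
      show "finite {0..N}" by simp
      show "(\<lambda>j. 2 * j) ` {0..n} \<subseteq> {0..N}" using N by auto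
      show "\<forall>i\<in>{0..N} - (\<lambda>j. 2 * j) ` {0..n}. h i = 0"
      proof
        fix i assume i: "i \<in> {0..N} - (\<lambda>j. 2 * j) ` {0..n}"
        have "odd i"
        proof
          assume "even i"
          then obtain j where "i = 2 * j" by blast
          hence "i \<in> (\<lambda>j. 2 * j) ` {0..n}" using i N by auto
          thus False using i by blast
        qed
        thus "h i = 0" unfolding h_def by simp
      qed
    qed
    also have "\<dots> = (\<Sum>j=0..n. h (2 * j))" by (subst sum.reindex) (auto simp: inj_on_def)
    also have "\<dots> = (\<Sum>j=0..n. f $ j * g $ (n - j))"
    proof (rule sum.cong[OF refl])
      fix j assume "j \<in> {0..n}"
      hence "N - 2 * j = 2 * (n - j)" using N by auto
      thus "h (2 * j) = f $ j * g $ (n - j)" unfolding h_def by simp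
    qed
    finally show ?thesis using R N by (simp add: sub2_nth fps_mult_nth)
  next
    case False
    have "h i = 0" if "i \<in> {0..N}" for i
    proof -
      have "odd i \<or> odd (N - i)" using False that by auto
      thus ?thesis unfolding h_def by auto
    qed
    hence "(\<Sum>i=0..N. h i) = 0" by simp
    thus ?thesis using R False by (simp add: sub2_nth)
  qed
qed

lemma sub2_power: "sub2 (f ^ n) = sub2 f ^ n"
  by (induction n) (simp_all add: sub2_1 sub2_mult)

fun hor :: "int list \<Rightarrow> rat fps" where
  "hor [] = 0"
| "hor (a # c) = of_int a + fps_X * hor c"

definition cf :: "int list \<Rightarrow> nat \<Rightarrow> int" where
  "cf c n = (if n < length c then c ! n else 0)"

lemma hor_nth: "hor c $ n = of_int (cf c n)"
proof (induction c arbitrary: n)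
  case Nil thus ?case by (simp add: cf_def)
next
  case (Cons a c) thus ?case by (cases n) (auto simp: cf_def)
qed


lemma upt23: "[0..<23] = [0, 1, 2, 3, 4, 5, 6, 7, 8, 9, 10, 11, 12, 13, 14, 15, 16, 17, 18, 19, 20, 21, 22]" by (simp add: upt_rec numeral_eq_Suc)
lemma upt25: "[0..<25] = [0, 1, 2, 3, 4, 5, 6, 7, 8, 9, 10, 11, 12, 13, 14, 15, 16, 17, 18, 19, 20, 21, 22, 23, 24]" by (simp add: upt_rec numeral_eq_Suc)

lemma small_check:
  "map (\<lambda>n. sum_list (map (\<lambda>i. if i \<le> n then qw ! i * alist ! (n - i) else 0) [0..<23])) [0..<25] = map (cf pw) [0..<25]"
  unfolding upt23 upt25 qw_def alist_def pw_def cf_def by simp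

lemma sum_restrict23:
  fixes g :: "nat \<Rightarrow> 'a::comm_monoid_add"
  assumes "\<And>i. 23 \<le> i \<Longrightarrow> g i = 0"
  shows "(\<Sum>i=0..n. g i) = (\<Sum>i<23. if i \<le> n then g i else 0)"
proof -
  have Z: "\<forall>i\<in>{0..n} - {0..n} \<inter> {..<23}. g i = 0"
  proof
    fix i assume "i \<in> {0..n} - {0..n} \<inter> {..<23}"
    hence "23 \<le> i" by auto
    thus "g i = 0" by (rule assms)
  qed
  have "(\<Sum>i=0..n. g i) = (\<Sum>i\<in>{0..n} \<inter> {..<23}. g i)"
    using Z by (intro sum.mono_neutral_right) auto
  also have "\<dots> = (\<Sum>i\<in>{i\<in>{..<23}. i \<le> n}. g i)" by (rule sum.cong) auto
  also have "\<dots> = (\<Sum>i<23. if i \<le> n then g i else 0)" by (rule sum.inter_filter) simp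
  finally show ?thesis .
qed

lemma len_pw: "length pw = 19" unfolding pw_def by simp

lemma key_w: "Abs_fps (\<lambda>n. of_nat (cnt n (replicate 8 0)) :: rat) * hor qw = hor pw"
proof (rule fps_ext)
  fix n
  define B where "B = Abs_fps (\<lambda>n. of_nat (cnt n (replicate 8 0)) :: rat)"
  have "(B * hor qw) $ n = (hor qw * B) $ n" by (simp add: mult.commute)
  also have "\<dots> = (\<Sum>i=0..n. of_int (cf qw i) * of_nat (cnt (n - i) (replicate 8 0)))"
    unfolding fps_mult_nth hor_nth B_def by simp
  also have "\<dots> = (\<Sum>i<23. if i \<le> n then of_int (cf qw i) * of_nat (cnt (n - i) (replicate 8 0)) else 0)"
    by (rule sum_restrict23) (simp add: cf_def len_qw)
  also have "\<dots> = of_int (cf pw n)"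
  proof (cases "25 \<le> n")
    case True
    have "(\<Sum>i<23. if i \<le> n then of_int (cf qw i) * of_nat (cnt (n - i) (replicate 8 0)) else (0::rat))
        = of_int (\<Sum>i<23. qw ! i * int (cnt ((n - 22) + 22 - i) (SL ! 0)))"
      using True by (simp add: cf_def len_qw SL0)
    also have "\<dots> = 0" using vrec[of "n - 22" 0] True by simp
    finally show ?thesis using True len_pw by (simp add: cf_def)
  next
    case False
    hence n: "n < 25" by simp
    have "(\<Sum>i<23. if i \<le> n then of_int (cf qw i) * of_nat (cnt (n - i) (replicate 8 0)) else (0::rat))
        = (\<Sum>i<23. of_int (if i \<le> n then qw ! i * alist ! (n - i) else 0))"
    proof (rule sum.cong[OF refl])
      fix i assume "i \<in> {..<23::nat}"
      thus "(if i \<le> n then of_int (cf qw i) * of_nat (cnt (n - i) (replicate 8 0)) else (0::rat))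
          = of_int (if i \<le> n then qw ! i * alist ! (n - i) else 0)"
        using alist_ok[of "n - i"] n by (simp add: cf_def len_qw)
    qed
    also have "\<dots> = of_int (sum_list (map (\<lambda>i. if i \<le> n then qw ! i * alist ! (n - i) else 0) [0..<23]))"
      by (simp add: sum_set_upt_conv_sum_list_nat[symmetric] atLeast0LessThan)
    also have "\<dots> = of_int (cf pw n)"
    proof -
      have "\<forall>m\<in>set [0..<25]. sum_list (map (\<lambda>i. if i \<le> m then qw ! i * alist ! (m - i) else 0) [0..<23]) = cf pw m"
        using small_check by (simp only: map_eq_conv)
      thus ?thesis using n by simp
    qed
    finally show ?thesis .
  qed
  also have "\<dots> = hor pw $ n" by (simp add: hor_nth)
  finally show "(Abs_fps (\<lambda>n. of_nat (cnt n (replicate 8 0)) :: rat) * hor qw) $ n = hor pw $ n"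
    unfolding B_def .
qed

lemma Qexpr: "hor qw = (let Y = fps_X in 1 - Y - Y^2 - 9*Y^4 + 2*Y^5 + 8*Y^6 + 5*Y^7 + 16*Y^8 - 13*Y^10 - 6*Y^11
       - 13*Y^12 - 2*Y^13 + 10*Y^14 + 6*Y^15 + 6*Y^16 + Y^17 - 5*Y^18 - 2*Y^19 - Y^20 + Y^22)"
  unfolding qw_def Let_def by (simp, algebra)

lemma Pexpr: "hor pw = (let Y = fps_X in (1 - Y)^3 * (1 + Y)^3 * (1 + Y^2)^3 * (1 - Y^2 - Y^3 - Y^4 + Y^6))"
  unfolding pw_def Let_def by (simp, algebra)


theorem mainTheorem7:
  fixes X :: "rat fps"
  defines "X \<equiv> fps_X"
  shows "Abs_fps (\<lambda>N. of_nat (T14_8 N)) =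
    ((1 - X^2)^3 * (1 + X^2)^3 * (1 + X^4)^3 * (1 - X^4 - X^6 - X^8 + X^12)) /
    (1 - X^2 - X^4 - 9*X^8 + 2*X^10 + 8*X^12 + 5*X^14 + 16*X^16 - 13*X^20 - 6*X^22
       - 13*X^24 - 2*X^26 + 10*X^28 + 6*X^30 + 6*X^32 + X^34 - 5*X^36 - 2*X^38
       - X^40 + X^44)"
proof -
  define A where "A = Abs_fps (\<lambda>N. of_nat (T14_8 N) :: rat)"
  define B where "B = Abs_fps (\<lambda>n. of_nat (cnt n (replicate 8 0)) :: rat)"
  define Q where "Q = (1 - X^2 - X^4 - 9*X^8 + 2*X^10 + 8*X^12 + 5*X^14 + 16*X^16 - 13*X^20 - 6*X^22
       - 13*X^24 - 2*X^26 + 10*X^28 + 6*X^30 + 6*X^32 + X^34 - 5*X^36 - 2*X^38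
       - X^40 + X^44)"
  define P where "P = ((1 - X^2)^3 * (1 + X^2)^3 * (1 + X^4)^3 * (1 - X^4 - X^6 - X^8 + X^12))"
  have AB: "A = sub2 B"
  proof (rule fps_ext)
    fix N
    show "A $ N = sub2 B $ N"
    proof (cases "even N")
      case True
      then obtain n where N: "N = 2 * n" by blast
      thus ?thesis unfolding A_def B_def sub2_nth using T14_even[of n] by simp
    next
      case False
      thus ?thesis unfolding A_def B_def sub2_nth using T14_odd[of N] by simp
    qed
  qed
  have QQ: "Q = sub2 (hor qw)"
    unfolding Q_def Qexpr Let_def X_def
    by (simp add: sub2_add sub2_diff sub2_mult sub2_power sub2_X sub2_numeral sub2_1 power_mult[symmetric])
  have PP: "P = sub2 (hor pw)"
    unfolding P_def Pexpr Let_def X_def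
    by (simp add: sub2_add sub2_diff sub2_mult sub2_power sub2_X sub2_numeral sub2_1 power_mult[symmetric])
  have key: "A * Q = P"
    unfolding AB QQ PP sub2_mult[symmetric] B_def key_w ..
  have q0: "Q $ 0 \<noteq> 0"
    unfolding QQ sub2_nth hor_nth by (simp add: cf_def qw_def)
  have "P / Q = A * Q * inverse Q" unfolding key[symmetric] by (rule fps_divide_unit[OF q0])
  also have "\<dots> = A" using inverse_mult_eq_1'[OF q0] by (simp add: mult.assoc)
  finally show ?thesis unfolding A_def P_def Q_def by simp
qed


end
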